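(* Let $p$ be one of $(12,\{0,1\},\{0,1\})$, $(12,\{0,1\},\{0,2\})$, $(12,\{0,1\},\{1,2\})$, $(12,\{0,2\},\{0,2\})$, or any pattern in the same symmetry class as one of these. Then for all $n>1$, $a_n(p)=n!-(n-2)!$.
   Context: For $n\ge1$, $\mathcal S_n$ is the set of permutations $\pi=\pi_1\cdots\pi_n$ of $[n]$. A bi-vincular pattern of length $k$ is a triple $p=(\sigma,X,Y)$ with $\sigma\in\mathcal S_k$ and $X,Y\subseteq\{0,1,\dots,k\}$. A permutation $\pi\in\mathcal S_n$ contains $p$ if there are indices $1\le i_1<\dots<i_k\le n$ such that $(\pi_{i_1},\dots,\pi_{i_k})$ is order-isomorphic to $\sigma$ and, letting $j_1<\dots<j_k$ be the values $\pi_{i_1},\dots,\pi_{i_k}$ sorted increasingly and setting $i_0=j_0=0$, $i_{k+1}=j_{k+1}=n+1$, one has $i_{x+1}=i_x+1$ for all $x\in X$ and $j_{y+1}=j_y+1$ for all $y\in Y$. Otherwise $\pi$ avoids $p$; $a_n(p)$ is the number of $\pi\in\mathcal S_n$ avoiding $p$. Symmetries: $p^{i}=(\sigma^{-1},Y,X)$, $p^{r}=(\sigma^{r},\{k-x:x\in X\},Y)$, $p^{c}=(\sigma^{c},X,\{k-y:y\in Y\})$ with $\sigma^r_j=\sigma_{k+1-j}$, $\sigma^c_j=k+1-\sigma_j$; the symmetry class of $p$ consists of all patterns obtained from $p$ by finitely many applications of these maps. *)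

theory Defs
  imports Main
begin

text \<open>Permutations of [n] as lists of length n (one-line notation, 1-indexed entries
  pi_i = pi ! (i - 1)).\<close>
definition perms :: "nat \<Rightarrow> nat list set" where
  "perms n = {\<pi>. length \<pi> = n \<and> distinct \<pi> \<and> set \<pi> = {1..n}}"

type_synonym bvpattern = "nat list \<times> nat set \<times> nat set"

definition ext :: "nat \<Rightarrow> nat \<Rightarrow> (nat \<Rightarrow> nat) \<Rightarrow> nat \<Rightarrow> nat" where
  "ext k n f x = (if x = 0 then 0 else if x = k + 1 then n + 1 else f x)"

definition contains :: "nat list \<Rightarrow> bvpattern \<Rightarrow> bool" where
  "contains \<pi> p = (case p of (\<sigma>, X, Y) \<Rightarrow>
     (let k = length \<sigma>; n = length \<pi> in
      \<exists>i :: nat \<Rightarrow> nat.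
        (\<forall>a \<in> {1..k}. 1 \<le> i a \<and> i a \<le> n) \<and>
        (\<forall>a b. 1 \<le> a \<longrightarrow> a < b \<longrightarrow> b \<le> k \<longrightarrow> i a < i b) \<and>
        (\<forall>a \<in> {1..k}. \<forall>b \<in> {1..k}.
            (\<pi> ! (i a - 1) < \<pi> ! (i b - 1)) = (\<sigma> ! (a - 1) < \<sigma> ! (b - 1))) \<and>
        (let js = sort (map (\<lambda>a. \<pi> ! (i a - 1)) [1..<k+1]);
             j = (\<lambda>t. js ! (t - 1)) in
          (\<forall>x \<in> X. ext k n i (x + 1) = ext k n i x + 1) \<and>
          (\<forall>y \<in> Y. ext k n j (y + 1) = ext k n j y + 1))))"

definition avoiders :: "nat \<Rightarrow> bvpattern \<Rightarrow> nat" where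
  "avoiders n p = card {\<pi> \<in> perms n. \<not> contains \<pi> p}"

definition perm_inv :: "nat list \<Rightarrow> nat list" where
  "perm_inv \<sigma> = map (\<lambda>v. (LEAST a. a < length \<sigma> \<and> \<sigma> ! a = v) + 1) [1..<length \<sigma> + 1]"

definition pat_i :: "bvpattern \<Rightarrow> bvpattern" where
  "pat_i p = (case p of (\<sigma>, X, Y) \<Rightarrow> (perm_inv \<sigma>, Y, X))"

definition pat_r :: "bvpattern \<Rightarrow> bvpattern" where
  "pat_r p = (case p of (\<sigma>, X, Y) \<Rightarrow> (rev \<sigma>, (\<lambda>x. length \<sigma> - x) ` X, Y))"

definition pat_c :: "bvpattern \<Rightarrow> bvpattern" where
  "pat_c p = (case p of (\<sigma>, X, Y) \<Rightarrow>
     (map (\<lambda>v. length \<sigma> + 1 - v) \<sigma>, X, (\<lambda>y. length \<sigma> - y) ` Y))"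

inductive_set sym_class :: "bvpattern \<Rightarrow> bvpattern set" for p :: bvpattern where
  base: "p \<in> sym_class p"
| inv: "q \<in> sym_class p \<Longrightarrow> pat_i q \<in> sym_class p"
| rev: "q \<in> sym_class p \<Longrightarrow> pat_r q \<in> sym_class p"
| comp: "q \<in> sym_class p \<Longrightarrow> pat_c q \<in> sym_class p"

end

theory Submission
  imports Defs "HOL-Combinatorics.Multiset_Permutations"
begin

lemma perms_eq: "perms n = permutations_of_set {1..n}"
  by (auto simp: perms_def permutations_of_set_def distinct_card[symmetric])

lemma card_perms: "card (perms n) = fact n"
  by (simp add: perms_eq)

lemma finite_perms: "finite (perms n)"
  by (simp add: perms_eq)

definition fib :: "nat \<Rightarrow> nat \<Rightarrow> nat \<Rightarrow> nat \<Rightarrow> nat \<Rightarrow> nat list set" where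
  "fib n p q a b = {\<pi>\<in>perms n. \<pi>!(p-1)=a \<and> \<pi>!(q-1)=b}"

lemma relabel_exists:
  assumes "a \<in> S" "b \<in> S" "a \<noteq> b" "a' \<in> S" "b' \<in> S" "a' \<noteq> b'"
  shows "\<exists>h. inj h \<and> h ` S = S \<and> h a = a' \<and> h b = b'"
proof -
  define h1 where "h1 = transpose a a'"
  define h2 where "h2 = transpose (h1 b) b'"
  have hb: "h1 b \<noteq> a'" unfolding h1_def using assms
    by (metis transpose_apply_first transpose_eq_iff)
  have hbS: "h1 b \<in> S" unfolding h1_def using assms by (auto simp: transpose_def)
  have "inj (h2 \<circ> h1)" unfolding h1_def h2_def by (simp add: inj_compose inj_transpose)
  moreover have "(h2 \<circ> h1) ` S = S"
  proof -
    have "h1 ` S = S" unfolding h1_def using assms by simp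
    moreover have "h2 ` S = S" unfolding h2_def using assms hbS by simp
    ultimately show ?thesis by (metis image_comp)
  qed
  moreover have "(h2 \<circ> h1) a = a'" using hb assms unfolding h2_def h1_def
    by (auto simp: transpose_def)
  moreover have "(h2 \<circ> h1) b = b'" unfolding h2_def by simp
  ultimately show ?thesis by blast
qed

lemma fib_le:
  assumes "p \<in> {1..n}" "q \<in> {1..n}" "a\<in>{1..n}" "b\<in>{1..n}" "a\<noteq>b" "a'\<in>{1..n}" "b'\<in>{1..n}" "a'\<noteq>b'"
  shows "card (fib n p q a b) \<le> card (fib n p q a' b')"
proof -
  obtain h where h: "inj h" "h ` {1..n} = {1..n}" "h a = a'" "h b = b'"
    using relabel_exists[OF assms(3-8)] by blast
  have "map h ` fib n p q a b \<subseteq> fib n p q a' b'"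
  proof
    fix x assume "x \<in> map h ` fib n p q a b"
    then obtain \<pi> where x: "x = map h \<pi>" and pi: "\<pi> \<in> fib n p q a b" by blast
    have l: "length \<pi> = n" "distinct \<pi>" "set \<pi> = {1..n}" "\<pi>!(p-1) = a" "\<pi>!(q-1) = b"
      using pi by (auto simp: fib_def perms_def)
    have "p - 1 < n" "q - 1 < n" using assms(1,2) by auto
    then have "x!(p-1) = a'" "x!(q-1) = b'" using l h x by simp_all
    moreover have "length x = n" "set x = {1..n}" using l h x by simp_all
    moreover have "distinct x" using l h x by (simp add: distinct_map inj_on_subset[OF h(1)])
    ultimately show "x \<in> fib n p q a' b'" by (simp add: fib_def perms_def)
  qed
  moreover have "inj_on (map h) (fib n p q a b)"
    using h(1) by (simp add: inj_on_def inj_map_eq_map)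
  moreover have "finite (fib n p q a' b')" using finite_perms unfolding fib_def by simp
  ultimately show ?thesis using card_inj_on_le by blast
qed

lemma fib_eq:
  assumes "p \<in> {1..n}" "q \<in> {1..n}" "a\<in>{1..n}" "b\<in>{1..n}" "a\<noteq>b" "a'\<in>{1..n}" "b'\<in>{1..n}" "a'\<noteq>b'"
  shows "card (fib n p q a b) = card (fib n p q a' b')"
  using fib_le[OF assms] fib_le[OF assms(1,2,6,7,8,3,4,5)] by simp

lemma card_D: "card {(a,b). a \<in> {1..n} \<and> b \<in> {1..(n::nat)} \<and> a \<noteq> b} = n * (n - 1)"
proof -
  have e: "{(a,b). a \<in> {1..n} \<and> b \<in> {1..(n::nat)} \<and> a \<noteq> b} = ({1..n} \<times> {1..n}) - (\<lambda>a. (a,a)) ` {1..n}"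
    by auto
  have "card ((\<lambda>a. (a,a)) ` {1..n}) = n" by (simp add: card_image inj_on_def)
  moreover have "card ({1..n} \<times> {1..n}) = n * n" by simp
  ultimately show ?thesis unfolding e
    by (subst card_Diff_subset) (auto simp: diff_mult_distrib2)
qed

lemma fib_card:
  assumes "p \<in> {1..n}" "q \<in> {1..n}" "p \<noteq> q" "a\<in>{1..n}" "b\<in>{1..n}" "a\<noteq>b"
  shows "card (fib n p q a b) = fact (n - 2)"
proof -
  define D where "D = {(a,b). a \<in> {1..n} \<and> b \<in> {1..(n::nat)} \<and> a \<noteq> b}"
  have fD: "finite D" unfolding D_def
    by (rule finite_subset[of _ "{1..n} \<times> {1..n}"]) auto
  have U: "perms n = (\<Union>d\<in>D. fib n p q (fst d) (snd d))"
  proof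
    show "perms n \<subseteq> (\<Union>d\<in>D. fib n p q (fst d) (snd d))"
    proof
      fix \<pi> assume pi: "\<pi> \<in> perms n"
      then have l: "length \<pi> = n" "distinct \<pi>" "set \<pi> = {1..n}" by (auto simp: perms_def)
      have pq: "p - 1 < n" "q - 1 < n" "p - 1 \<noteq> q - 1" using assms by auto
      have "(\<pi>!(p-1), \<pi>!(q-1)) \<in> D" unfolding D_def using l pq
        by (auto simp: nth_eq_iff_index_eq simp del: atLeastAtMost_iff dest!: nth_mem) 
      then show "\<pi> \<in> (\<Union>d\<in>D. fib n p q (fst d) (snd d))"
        using pi by (auto simp: fib_def intro!: bexI[of _ "(\<pi>!(p-1), \<pi>!(q-1))"])
    qed
  qed (auto simp: fib_def)
  have "card (perms n) = (\<Sum>d\<in>D. card (fib n p q (fst d) (snd d)))"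
    unfolding U
    by (rule card_UN_disjoint[OF fD]) (auto simp: fib_def finite_perms)
  also have "\<dots> = (\<Sum>d\<in>D. card (fib n p q a b))"
    proof (rule sum.cong)
    fix d assume "d \<in> D"
    then show "card (fib n p q (fst d) (snd d)) = card (fib n p q a b)"
      using assms fib_eq[of p n q "fst d" "snd d" a b] by (auto simp: D_def)
  qed simp
  also have "\<dots> = n * (n - 1) * card (fib n p q a b)"
    using card_D unfolding D_def by simp
  finally have e: "fact n = n * (n - 1) * card (fib n p q a b)" by (simp add: card_perms)
  have "n \<ge> 2" using assms by auto
  then have f: "fact n = n * (n - 1) * (fact (n - 2) :: nat)"
    proof -
    obtain m where m: "n = Suc (Suc m)" using \<open>n \<ge> 2\<close> by (metis add_2_eq_Suc le_Suc_ex)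
    show ?thesis unfolding m by (simp add: fact_Suc algebra_simps)
  qed
  have "n * (n - 1) * card (fib n p q a b) = n * (n - 1) * fact (n - 2)" using e f by linarith
  moreover have "n * (n - 1) > 0" using \<open>n \<ge> 2\<close> by simp
  ultimately show ?thesis by (metis mult_left_cancel neq0_conv)
qed

definition pos :: "nat set \<Rightarrow> nat \<Rightarrow> nat \<times> nat" where
  "pos X n = (if X = {0,1} then (1,2) else if X = {1,2} then (n-1, n) else (1,n))"

definition valid :: "nat set \<Rightarrow> bool" where
  "valid X \<longleftrightarrow> X = {0,1} \<or> X = {1,2} \<or> X = {0,2}"

lemma ext_cond:
  assumes "valid X" "1 \<le> f 1" "f 1 < f 2" "f 2 \<le> n"
  shows "(\<forall>x\<in>X. ext 2 n f (x+1) = ext 2 n f x + 1) \<longleftrightarrow> (f 1 = fst (pos X n) \<and> f 2 = snd (pos X n))"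
proof -
  have d: "({0,1}::nat set) \<noteq> {1,2}" "({0,1}::nat set) \<noteq> {0,2}" "({1,2}::nat set) \<noteq> {0,2}"
    by (simp_all add: insert_eq_iff)
  consider "X = {0,1}" | "X = {1,2}" | "X = {0,2}" using assms(1) unfolding valid_def by blast
  then show ?thesis
  proof cases
    case 1
    then show ?thesis using assms(2-4) by (simp add: pos_def ext_def numeral_2_eq_2) arith
  next
    case 2
    then show ?thesis using assms(2-4) d by (simp add: pos_def ext_def numeral_2_eq_2) arith
  next
    case 3
    then show ?thesis using assms(2-4) d by (simp add: pos_def ext_def numeral_2_eq_2) arith
  qed
qed

lemma all12: "(\<forall>a b. 1 \<le> a \<longrightarrow> a < b \<longrightarrow> b \<le> (2::nat) \<longrightarrow> P a b) \<longleftrightarrow> P 1 2"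
proof
  assume "P 1 2" then show "\<forall>a b. 1 \<le> a \<longrightarrow> a < b \<longrightarrow> b \<le> (2::nat) \<longrightarrow> P a b"
    by (metis One_nat_def Suc_1 Suc_le_eq le_antisym less_2_cases_iff not_less_eq_eq)
qed simp

lemma contains2:
  assumes "length \<sigma> = 2"
  shows "contains \<pi> (\<sigma>,X,Y) \<longleftrightarrow> (\<exists>i. 1 \<le> i 1 \<and> i 1 \<le> length \<pi> \<and> 1 \<le> i 2 \<and> i 2 \<le> length \<pi> \<and> i 1 < i 2 \<and>
     ((\<pi>!(i 1 - 1) < \<pi>!(i 2 - 1)) = (\<sigma>!0 < \<sigma>!1)) \<and>
     ((\<pi>!(i 2 - 1) < \<pi>!(i 1 - 1)) = (\<sigma>!1 < \<sigma>!0)) \<and>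
     (\<forall>x\<in>X. ext 2 (length \<pi>) i (x+1) = ext 2 (length \<pi>) i x + 1) \<and>
     (\<forall>y\<in>Y. ext 2 (length \<pi>) (\<lambda>t. sort [\<pi>!(i 1 - 1), \<pi>!(i 2 - 1)] ! (t-1)) (y+1)
          = ext 2 (length \<pi>) (\<lambda>t. sort [\<pi>!(i 1 - 1), \<pi>!(i 2 - 1)] ! (t-1)) y + 1))"
proof -
  have u: "[1..<2+1] = [1,2::nat]" by (simp add: upt_rec)
  have s: "{1..2::nat} = {1,2}" by auto
  show ?thesis unfolding contains_def prod.case Let_def assms u s all12
    apply (simp only: ball_simps insert_iff empty_iff simp_thms)
    apply (simp add: numeral_2_eq_2)
    done
qed

definition tgt :: "nat list \<Rightarrow> nat set \<Rightarrow> nat \<Rightarrow> nat \<times> nat" where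
  "tgt \<sigma> Y n = (if \<sigma> = [1,2] then pos Y n else prod.swap (pos Y n))"

lemma pos_bounds:
  assumes "valid X" "n \<ge> 2"
  shows "1 \<le> fst (pos X n) \<and> fst (pos X n) < snd (pos X n) \<and> snd (pos X n) \<le> n"
proof -
  have d: "({0,1}::nat set) \<noteq> {1,2}" "({0,1}::nat set) \<noteq> {0,2}" "({1,2}::nat set) \<noteq> {0,2}"
    by (simp_all add: insert_eq_iff)
  consider "X = {0,1}" | "X = {1,2}" | "X = {0,2}" using assms(1) unfolding valid_def by blast
  then show ?thesis using d assms(2) by cases (simp_all add: pos_def)
qed

lemma sort2: "sort [x, y::nat] = [min x y, max x y]"
  by auto

lemma contains_char:
  assumes pi: "\<pi> \<in> perms n" and n2: "n \<ge> 2" and sig: "\<sigma> = [1,2] \<or> \<sigma> = [2,1]"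
    and vX: "valid X" and vY: "valid Y"
  shows "contains \<pi> (\<sigma>,X,Y) \<longleftrightarrow> \<pi>!(fst (pos X n) - 1) = fst (tgt \<sigma> Y n) \<and> \<pi>!(snd (pos X n) - 1) = snd (tgt \<sigma> Y n)"
proof -
  have len: "length \<pi> = n" and dist: "distinct \<pi>" and st: "set \<pi> = {1..n}"
    using pi by (auto simp: perms_def)
  have ls: "length \<sigma> = 2" using sig by auto
  obtain P1 P2 where pX: "pos X n = (P1,P2)" by (cases "pos X n")
  obtain V1 V2 where pY: "pos Y n = (V1,V2)" by (cases "pos Y n")
  have bX: "1 \<le> P1" "P1 < P2" "P2 \<le> n" using pos_bounds[OF vX n2] pX by auto
  have bY: "1 \<le> V1" "V1 < V2" "V2 \<le> n" using pos_bounds[OF vY n2] pY by auto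
  have inr: "\<And>k. 1 \<le> k \<Longrightarrow> k \<le> n \<Longrightarrow> \<pi>!(k-1) \<in> {1..n}"
    using st len by (metis Suc_le_eq Suc_pred' le_eq_less_or_eq less_imp_diff_less nth_mem zero_less_one order_less_le_trans)
  have neq: "\<And>k l. 1 \<le> k \<Longrightarrow> k \<le> n \<Longrightarrow> 1 \<le> l \<Longrightarrow> l \<le> n \<Longrightarrow> k \<noteq> l \<Longrightarrow> \<pi>!(k-1) \<noteq> \<pi>!(l-1)"
    using dist len by (simp add: nth_eq_iff_index_eq)
  show ?thesis
  proof
    assume "contains \<pi> (\<sigma>,X,Y)"
    then obtain i where i: "1 \<le> i 1" "i 1 \<le> length \<pi>" "1 \<le> i 2" "i 2 \<le> length \<pi>" "i 1 < i 2"
     "(\<pi>!(i 1 - 1) < \<pi>!(i 2 - 1)) = (\<sigma>!0 < \<sigma>!1)"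
     "(\<forall>x\<in>X. ext 2 (length \<pi>) i (x+1) = ext 2 (length \<pi>) i x + 1)"
     "(\<forall>y\<in>Y. ext 2 (length \<pi>) (\<lambda>t. sort [\<pi>!(i 1 - 1), \<pi>!(i 2 - 1)] ! (t-1)) (y+1)
          = ext 2 (length \<pi>) (\<lambda>t. sort [\<pi>!(i 1 - 1), \<pi>!(i 2 - 1)] ! (t-1)) y + 1)"
      unfolding contains2[OF ls] by blast
    have iP: "i 1 = P1" "i 2 = P2" using ext_cond[OF vX, of i n] i pX len by auto
    define v1 where "v1 = \<pi>!(P1 - 1)"
    define v2 where "v2 = \<pi>!(P2 - 1)"
    have v: "v1 \<in> {1..n}" "v2 \<in> {1..n}" "v1 \<noteq> v2"
      using inr neq bX unfolding v1_def v2_def by auto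
    have "min v1 v2 = V1 \<and> max v1 v2 = V2"
      using ext_cond[OF vY, of "\<lambda>t. sort [v1, v2] ! (t-1)" n] i(8) v pY
      unfolding iP v1_def[symmetric] v2_def[symmetric] len sort2 by auto
    moreover have "(v1 < v2) = (\<sigma>!0 < \<sigma>!1)" using i(6) unfolding iP v1_def v2_def .
    ultimately have mo: "min v1 v2 = V1" "max v1 v2 = V2" "(v1 < v2) = (\<sigma>!0 < \<sigma>!1)" by auto
    from sig show "\<pi>!(fst (pos X n) - 1) = fst (tgt \<sigma> Y n) \<and> \<pi>!(snd (pos X n) - 1) = snd (tgt \<sigma> Y n)"
    proof
      assume s1: "\<sigma> = [1,2]"
      then have "v1 < v2" using mo(3) by simp
      then have "v1 = V1" "v2 = V2" using mo(1,2) by (simp_all add: min_def max_def)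
      then show ?thesis using s1 unfolding pX pY tgt_def v1_def v2_def by simp
    next
      assume s2: "\<sigma> = [2,1]"
      then have "\<not> v1 < v2" using mo(3) by simp
      then have "v2 < v1" using v(3) by simp
      then have "v2 = V1" "v1 = V2" using mo(1,2) by (simp_all add: min_def max_def)
      then show ?thesis using s2 unfolding pX pY tgt_def v1_def v2_def by simp
    qed
  next
    assume a: "\<pi>!(fst (pos X n) - 1) = fst (tgt \<sigma> Y n) \<and> \<pi>!(snd (pos X n) - 1) = snd (tgt \<sigma> Y n)"
    define i where "i = (\<lambda>a::nat. if a = 1 then P1 else P2)"
    have i12: "i 1 = P1" "i 2 = P2" unfolding i_def by auto
    define v1 where "v1 = \<pi>!(P1 - 1)"
    define v2 where "v2 = \<pi>!(P2 - 1)"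
    have vv: "(v1, v2) = tgt \<sigma> Y n" using a unfolding pX v1_def v2_def by (simp add: prod_eq_iff)
    have o: "(v1 < v2) = (\<sigma>!0 < \<sigma>!1)" "(v2 < v1) = (\<sigma>!1 < \<sigma>!0)"
      using vv sig bY unfolding tgt_def pY by auto
    have mm: "min v1 v2 = V1 \<and> max v1 v2 = V2"
      using vv sig bY unfolding tgt_def pY by auto
    have e1: "\<forall>x\<in>X. ext 2 n i (x+1) = ext 2 n i x + 1"
      using ext_cond[OF vX, of i n] i12 bX pX by auto
    have e2: "\<forall>y\<in>Y. ext 2 n (\<lambda>t. sort [v1, v2] ! (t-1)) (y+1) = ext 2 n (\<lambda>t. sort [v1, v2] ! (t-1)) y + 1"
      using ext_cond[OF vY, of "\<lambda>t. sort [v1, v2] ! (t-1)" n] mm pY bY unfolding sort2 by auto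
    show "contains \<pi> (\<sigma>,X,Y)"
      unfolding contains2[OF ls]
      apply (rule exI[of _ i])
      unfolding i12 len v1_def[symmetric] v2_def[symmetric]
      using bX o e1 e2 unfolding i12 v1_def v2_def by auto
  qed
qed

definition Inv :: "bvpattern \<Rightarrow> bool" where
  "Inv q \<longleftrightarrow> (fst q = [1,2] \<or> fst q = [2,1]) \<and> valid (fst (snd q)) \<and> valid (snd (snd q))"

lemma perm_inv12: "perm_inv [1,2] = [1,2]"
proof -
  have a: "(LEAST a. a < Suc (Suc 0) \<and> [Suc 0, 2::nat] ! a = Suc 0) = 0" by (rule Least_equality) auto
  have b: "(LEAST a. a < Suc (Suc 0) \<and> [Suc 0, 2::nat] ! a = Suc (Suc 0)) = 1"
    by (rule Least_equality) (auto simp: less_Suc_eq)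
  show ?thesis unfolding perm_inv_def by (simp add: upt_rec a b)
qed

lemma perm_inv21: "perm_inv [2,1] = [2,1]"
proof -
  have a: "(LEAST a. a < Suc (Suc 0) \<and> [2, Suc 0::nat] ! a = Suc 0) = 1"
    by (rule Least_equality) (auto simp: less_Suc_eq)
  have b: "(LEAST a. a < Suc (Suc 0) \<and> [2, Suc 0::nat] ! a = Suc (Suc 0)) = 0" by (rule Least_equality) auto
  show ?thesis unfolding perm_inv_def by (simp add: upt_rec a b)
qed

lemma valid_refl: "valid X \<Longrightarrow> valid ((\<lambda>x. 2 - x) ` X)"
proof -
  assume "valid X"
  then consider "X = {0,1}" | "X = {1,2}" | "X = {0,2}" unfolding valid_def by blast
  then show ?thesis by cases (simp_all add: valid_def insert_commute)
qed

lemma Inv_step: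
  assumes "Inv q" shows "Inv (pat_i q)" "Inv (pat_r q)" "Inv (pat_c q)"
proof -
  obtain \<sigma> X Y where q: "q = (\<sigma>, X, Y)" by (cases q) auto
  have sig: "\<sigma> = [1,2] \<or> \<sigma> = [2,1]" and vX: "valid X" and vY: "valid Y"
    using assms unfolding q Inv_def by auto
  have l: "length \<sigma> = 2" using sig by auto
  show "Inv (pat_i q)" using sig vX vY perm_inv12 perm_inv21 unfolding q Inv_def pat_i_def
    by (auto simp del: One_nat_def)
  show "Inv (pat_r q)" using sig vX vY valid_refl valid_refl[unfolded numeral_2_eq_2] unfolding q Inv_def pat_r_def l
    by (auto simp del: One_nat_def)
  show "Inv (pat_c q)" using sig vX vY valid_refl valid_refl[unfolded numeral_2_eq_2] unfolding q Inv_def pat_c_def l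
    by (auto simp del: One_nat_def)
qed

lemma Inv_sym: assumes "Inv p" shows "q \<in> sym_class p \<Longrightarrow> Inv q"
  by (induction rule: sym_class.induct) (use assms Inv_step in auto)

lemma main_Inv:
  assumes "Inv p" "n \<ge> 2"
  shows "avoiders n p = fact n - fact (n - 2)"
proof -
  obtain \<sigma> X Y where p: "p = (\<sigma>, X, Y)" by (cases p) auto
  have sig: "\<sigma> = [1,2] \<or> \<sigma> = [2,1]" and vX: "valid X" and vY: "valid Y"
    using assms(1) unfolding p Inv_def by auto
  obtain P1 P2 where pX: "pos X n = (P1,P2)" by (cases "pos X n")
  obtain a b where tY: "tgt \<sigma> Y n = (a,b)" by (cases "tgt \<sigma> Y n")
  have bX: "1 \<le> P1" "P1 < P2" "P2 \<le> n" using pos_bounds[OF vX assms(2)] pX by auto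
  have bY: "a \<in> {1..n}" "b \<in> {1..n}" "a \<noteq> b"
    using pos_bounds[OF vY assms(2)] tY unfolding tgt_def
    by (auto split: if_splits simp: prod_eq_iff)
  have C: "{\<pi> \<in> perms n. contains \<pi> p} = fib n P1 P2 a b"
    unfolding p fib_def using contains_char[OF _ assms(2) sig vX vY] pX tY by auto
  have "{\<pi> \<in> perms n. \<not> contains \<pi> p} = perms n - {\<pi> \<in> perms n. contains \<pi> p}" by auto
  then have "avoiders n p = card (perms n) - card {\<pi> \<in> perms n. contains \<pi> p}"
    unfolding avoiders_def by (simp add: card_Diff_subset finite_perms)
  also have "\<dots> = fact n - fact (n - 2)"
    unfolding C card_perms using fib_card[of P1 n P2 a b] bX bY by auto
  finally show ?thesis .
qed

theorem mainTheorem5: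
  fixes p :: bvpattern and n :: nat
  assumes "p \<in> sym_class ([1,2], {0,1}, {0,1}) \<union> sym_class ([1,2], {0,1}, {0,2})
             \<union> sym_class ([1,2], {0,1}, {1,2}) \<union> sym_class ([1,2], {0,2}, {0,2})"
    and "n > 1"
  shows "avoiders n p = fact n - fact (n - 2)"
proof -
  have b: "Inv ([1,2], {0,1}, {0,1})" "Inv ([1,2], {0,1}, {0,2})" "Inv ([1,2], {0,1}, {1,2})"
    "Inv ([1,2], {0,2}, {0,2})" by (simp_all add: Inv_def valid_def)
  have "Inv p" using assms(1) Inv_sym[OF b(1)] Inv_sym[OF b(2)] Inv_sym[OF b(3)] Inv_sym[OF b(4)]
    by blast
  then show ?thesis using main_Inv assms(2) by simp
qed

end
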